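(* Let $Q=[s_-,s_+]\times[t_-,t_+]\subset\mathbb R^2$ and $X\in C^\infty(Q,V)$. Then for every $n\ge2$, $$\big\|\widehat R^{(n)}(X)\big\|\le C_n\,(|s_+-s_-|+|t_+-t_-|)^n,$$ where $C_n>0$ is a constant depending on $X$ and $n$.
   Context: $V$ is a finite-dimensional real Hilbert space with orthonormal basis $e_1,\dots,e_d$; $T_0(V)=\bigoplus_kV^{\otimes k}$ with words orthonormal. $\overline T_1(V)=T_0(V)\otimes\Lambda^2V\otimes T_0(V)$ graded by level ($V^{\otimes k}\otimes\Lambda^2V\otimes V^{\otimes(n-k-2)}$ is level $n$), orthonormal basis $e_{q_1}\cdots e_{q_k}\otimes(e_i\wedge e_j)\otimes e_{q_{k+1}}\cdots e_{q_{n-2}}$ ($i<j$), outer multiplication actions, $\delta(a\otimes(v\wedge w)\otimes b)=a(vw-wv)b$; $T_1(V)=\overline T_1(V)/\mathrm{Pf}$ with $\mathrm{Pf}=\mathrm{span}\{\delta(E)F-E\delta(F)\}$, level-$n$ part $T_1^{(n)}(V)$ identified with the orthogonal complement of $\mathrm{Pf}$ in level $n$ and normed accordingly; product $E*F=\delta(E)F=E\delta(F)$; on $\mathbb R\oplus\prod_{n\ge2}T_1^{(n)}(V)$, $(\lambda,E)*(\mu,F)=(\lambda\mu,\lambda F+\mu E+E*F)$; an invertible $g\in\prod_kV^{\otimes k}$ acts by $g\triangleright E=g\cdot E\cdot g^{-1}$. The path signature of smooth $x:[a,b]\to V$ is $S(x)=1+\sum_{m\ge1}\int_{a<u_1<\dots<u_m<b}dx_{u_1}\cdots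 dx_{u_m}$. For $(s,t)\in Q$ the tail path $x^{s,t}:[0,(s-s_-)+(t-t_-)]\to V$ is $x^{s,t}_u=X_{u+s_-,t_-}$ for $u\le s-s_-$ and $X_{s,u-(s-s_-)+t_-}$ otherwise; $J_{s,t}(X)=\sum_{i<j}(\partial_sX^i\partial_tX^j-\partial_sX^j\partial_tX^i)(s,t)\,e_i\wedge e_j\in\Lambda^2V=T_1^{(2)}(V)$. The surface signature is $\widehat R(X)=\widehat R_{s_+,t_+}(X)$ where $\partial_t\widehat R_{s,t}(X)=\widehat R_{s,t}(X)*\int_{s_-}^sS(x^{s',t})\triangleright J_{s',t}(X)\,ds'$, $\widehat R_{s,t_-}(X)=1$ (solved level by level); $\widehat R^{(n)}(X)\in T_1^{(n)}(V)$ is its level-$n$ component. *)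

theory Defs
  imports "HOL-Analysis.Analysis"
begin

text \<open>V = R^d with orthonormal basis e_0,...,e_{d-1}; a word is a list of letters < d.
  Elements of prod_k V^{\<otimes>k} are coefficient functions on words.\<close>

type_synonym word = "nat list"
type_synonym tens = "word \<Rightarrow> real"
text \<open>Index (k,i,j,w) of T1bar stands for the basis element
  (take k w) \<otimes> (e_i \<and> e_j) \<otimes> (drop k w), with i < j < d, k \<le> length w;
  its level is length w + 2.\<close>
type_synonym idx1 = "nat \<times> nat \<times> nat \<times> word"
type_synonym tens1 = "idx1 \<Rightarrow> real"

definition words :: "nat \<Rightarrow> nat \<Rightarrow> word set" where
  "words d n = {w. length w = n \<and> set w \<subseteq> {..<d}}"

definition idx1 :: "nat \<Rightarrow> nat \<Rightarrow> idx1 set" where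
  "idx1 d n = {(k,i,j,w). i < j \<and> j < d \<and> set w \<subseteq> {..<d} \<and> length w + 2 = n \<and> k \<le> length w}"

definition lvl1 :: "idx1 \<Rightarrow> nat" where
  "lvl1 = (\<lambda>(k,i,j,w). length w + 2)"

definition tmul :: "tens \<Rightarrow> tens \<Rightarrow> tens" where
  "tmul a b = (\<lambda>u. \<Sum>p\<le>length u. a (take p u) * b (drop p u))"

definition lact :: "tens \<Rightarrow> tens1 \<Rightarrow> tens1" where
  "lact a E = (\<lambda>(k,i,j,w). \<Sum>p\<le>k. a (take p w) * E (k - p, i, j, drop p w))"

definition ract :: "tens1 \<Rightarrow> tens \<Rightarrow> tens1" where
  "ract E b = (\<lambda>(k,i,j,w). \<Sum>q\<le>length w - k.
      E (k, i, j, take (length w - q) w) * b (drop (length w - q) w))"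

definition basis_delta :: "idx1 \<Rightarrow> word \<Rightarrow> real" where
  "basis_delta = (\<lambda>(k,i,j,w) u.
      (if u = take k w @ [i,j] @ drop k w then 1 else 0)
    - (if u = take k w @ [j,i] @ drop k w then 1 else 0))"

text \<open>delta(a \<otimes> (v\<and>w) \<otimes> b) = a(vw - wv)b\<close>
definition delta :: "nat \<Rightarrow> tens1 \<Rightarrow> tens" where
  "delta d E = (\<lambda>u. \<Sum>\<iota>\<in>idx1 d (length u). E \<iota> * basis_delta \<iota> u)"

definition pf_rel :: "nat \<Rightarrow> tens1 \<Rightarrow> tens1 \<Rightarrow> tens1" where
  "pf_rel d E F = (\<lambda>\<iota>. lact (delta d E) F \<iota> - ract E (delta d F) \<iota>)"

inductive_set Pf :: "nat \<Rightarrow> tens1 set" for d :: nat where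
  Pf_zero: "(\<lambda>\<iota>. 0) \<in> Pf d"
| Pf_add: "P \<in> Pf d \<Longrightarrow> Q \<in> Pf d \<Longrightarrow> (\<lambda>\<iota>. P \<iota> + Q \<iota>) \<in> Pf d"
| Pf_gen: "pf_rel d E F \<in> Pf d"

definition norm1 :: "nat \<Rightarrow> nat \<Rightarrow> tens1 \<Rightarrow> real" where
  "norm1 d n E = sqrt (\<Sum>\<iota>\<in>idx1 d n. (E \<iota>)\<^sup>2)"

text \<open>Norm on T_1^{(n)} (identified with the orthogonal complement of Pf in level n):
  the norm of the orthogonal projection of a representative = its distance to Pf.\<close>
definition qnorm :: "nat \<Rightarrow> nat \<Rightarrow> tens1 \<Rightarrow> real" where
  "qnorm d n E = Inf {norm1 d n (\<lambda>\<iota>. E \<iota> - P \<iota>) | P. P \<in> Pf d}"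

text \<open>inverse of g with g(empty word) = 1 in prod_k V^{\<otimes>k}\<close>
function tinv :: "tens \<Rightarrow> tens" where
  "tinv g u = (if u = [] then 1
     else - (\<Sum>p\<in>{1..length u}. g (take p u) * tinv g (drop p u)))"
  by auto
termination
  by (relation "Wellfounded.measure (\<lambda>(g,u). length u)") auto

definition act :: "tens \<Rightarrow> tens1 \<Rightarrow> tens1" where
  "act g E = ract (lact g E) (tinv g)"

text \<open>Path signature of x : [a,b] \<rightarrow> V (components x i), via iterated integrals;
  sigr takes the reversed word (outermost integration = last letter).\<close>
primrec sigr :: "(nat \<Rightarrow> real \<Rightarrow> real) \<Rightarrow> real \<Rightarrow> real \<Rightarrow> word \<Rightarrow> real" where
  "sigr x a b [] = 1"
| "sigr x a b (i # w) = integral {a..b} (\<lambda>u. sigr x a u w * deriv (x i) u)"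

definition sig :: "(nat \<Rightarrow> real \<Rightarrow> real) \<Rightarrow> real \<Rightarrow> real \<Rightarrow> tens" where
  "sig x a b = (\<lambda>w. sigr x a b (rev w))"

definition tailpath :: "(nat \<Rightarrow> real \<times> real \<Rightarrow> real) \<Rightarrow> real \<Rightarrow> real \<Rightarrow> real \<Rightarrow> real
    \<Rightarrow> nat \<Rightarrow> real \<Rightarrow> real" where
  "tailpath X sm tm s t = (\<lambda>i u. if u \<le> s - sm then X i (u + sm, tm)
                                  else X i (s, u - (s - sm) + tm))"

definition Jst :: "nat \<Rightarrow> (nat \<Rightarrow> real \<times> real \<Rightarrow> real) \<Rightarrow> real \<Rightarrow> real \<Rightarrow> tens1" where
  "Jst d X s t = (\<lambda>(k,i,j,w). if k = 0 \<and> w = [] \<and> i < j \<and> j < d then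
      deriv (\<lambda>s'. X i (s',t)) s * deriv (\<lambda>t'. X j (s,t')) t
    - deriv (\<lambda>s'. X j (s',t)) s * deriv (\<lambda>t'. X i (s,t')) t else 0)"

definition Fst :: "nat \<Rightarrow> (nat \<Rightarrow> real \<times> real \<Rightarrow> real) \<Rightarrow> real \<Rightarrow> real \<Rightarrow> real \<Rightarrow> real \<Rightarrow> tens1" where
  "Fst d X sm tm s t = (\<lambda>\<iota>. integral {sm..s}
      (\<lambda>s'. act (sig (tailpath X sm tm s' t) 0 ((s' - sm) + (t - tm))) (Jst d X s' t) \<iota>))"

text \<open>Level-by-level solution (representatives in T1bar) of
  d/dt E = F + E * F, E(tm) = 0, where R = 1 + E and E * F = delta(E) F.
  Rc n t contains the levels \<le> n.\<close>
primrec Rc :: "nat \<Rightarrow> (nat \<Rightarrow> real \<times> real \<Rightarrow> real) \<Rightarrow> real \<Rightarrow> real \<Rightarrow> real \<Rightarrow> nat \<Rightarrow> real \<Rightarrow> tens1" where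
  "Rc d X sm sp tm 0 t = (\<lambda>\<iota>. 0)"
| "Rc d X sm sp tm (Suc n) t = (\<lambda>\<iota>. if lvl1 \<iota> \<le> Suc n then
      integral {tm..t} (\<lambda>t'. Fst d X sm tm sp t' \<iota>
          + lact (delta d (Rc d X sm sp tm n t')) (Fst d X sm tm sp t') \<iota>)
    else 0)"

definition surf_sig :: "nat \<Rightarrow> (nat \<Rightarrow> real \<times> real \<Rightarrow> real) \<Rightarrow> real \<Rightarrow> real \<Rightarrow> real \<Rightarrow> real \<Rightarrow> nat \<Rightarrow> tens1" where
  "surf_sig d X sm sp tm tp n = Rc d X sm sp tm n tp"

fun pdiff :: "bool list \<Rightarrow> (real \<times> real \<Rightarrow> real) \<Rightarrow> real \<times> real \<Rightarrow> real" where
  "pdiff [] f = f"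
| "pdiff (b # bs) f = (\<lambda>(s,t). if b then deriv (\<lambda>s'. pdiff bs f (s',t)) s
                                else deriv (\<lambda>t'. pdiff bs f (s,t')) t)"

definition smooth_on :: "(real \<times> real) set \<Rightarrow> (real \<times> real \<Rightarrow> real) \<Rightarrow> bool" where
  "smooth_on U f \<longleftrightarrow> (\<forall>bs. continuous_on U (pdiff bs f) \<and>
     (\<forall>s t. (s,t) \<in> U \<longrightarrow> (\<lambda>s'. pdiff bs f (s',t)) differentiable (at s)
                         \<and> (\<lambda>t'. pdiff bs f (s,t')) differentiable (at t)))"

end

theory Submission
  imports Defs
begin


lemma integral_bound_fin:
  fixes f :: "real \<Rightarrow> real"
  assumes "a \<le> b" "0 \<le> B" "finite S" "\<And>x. x \<in> {a..b} - S \<Longrightarrow> \<bar>f x\<bar> \<le> B"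
  shows "\<bar>integral {a..b} f\<bar> \<le> B * (b - a)"
proof (cases "f integrable_on {a..b}")
  case True
  have "norm (integral {a..b} f) \<le> B * Henstock_Kurzweil_Integration.content {a..b}"
    by (rule has_integral_bound_real[OF assms(2,3) integrable_integral[OF True]]) (use assms(4) in auto)
  then show ?thesis using assms(1) by simp
next
  case False
  then show ?thesis using assms by (simp add: not_integrable_integral)
qed

lemma finite_idx1: "finite (idx1 d n)"
proof -
  have "idx1 d n \<subseteq> {..n} \<times> {..<d} \<times> {..<d} \<times> {w. set w \<subseteq> {..<d} \<and> length w = n - 2}"
    unfolding idx1_def by auto
  moreover have "finite ({..n} \<times> {..<d} \<times> {..<d} \<times> {w. set w \<subseteq> {..<d} \<and> length w = n - 2})"
    by (intro finite_cartesian_product finite_lists_length_eq) auto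
  ultimately show ?thesis by (rule finite_subset)
qed

lemma idx1_ge2: "\<iota> \<in> idx1 d m \<Longrightarrow> 2 \<le> m"
  unfolding idx1_def by auto

lemma lact_bound:
  assumes a: "\<And>u. set u \<subseteq> {..<d} \<Longrightarrow> \<bar>a u\<bar> \<le> \<alpha> (length u) * L ^ length u"
    and E: "\<And>m \<iota>. \<iota> \<in> idx1 d m \<Longrightarrow> \<bar>E \<iota>\<bar> \<le> \<beta> m * L ^ (m - r)"
    and r: "r \<le> 2" and L: "0 \<le> L" and al: "\<And>p. 0 \<le> \<alpha> p" and be: "\<And>m. 0 \<le> \<beta> m"
    and i: "\<iota> \<in> idx1 d m"
  shows "\<bar>lact a E \<iota>\<bar> \<le> (\<Sum>p\<le>m. \<alpha> p * \<beta> (m - p)) * L ^ (m - r)"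
proof -
  obtain k i j w where iota: "\<iota> = (k,i,j,w)" by (cases \<iota>) auto
  have w: "i < j" "j < d" "set w \<subseteq> {..<d}" "length w + 2 = m" "k \<le> length w"
    using i iota unfolding idx1_def by auto
  have "\<bar>lact a E \<iota>\<bar> = \<bar>\<Sum>p\<le>k. a (take p w) * E (k - p, i, j, drop p w)\<bar>"
    by (simp add: lact_def iota)
  also have "\<dots> \<le> (\<Sum>p\<le>k. \<bar>a (take p w) * E (k - p, i, j, drop p w)\<bar>)"
    by (rule sum_abs)
  also have "\<dots> \<le> (\<Sum>p\<le>k. \<alpha> p * \<beta> (m - p) * L ^ (m - r))"
  proof (rule sum_mono)
    fix p assume p: "p \<in> {..k}"
    have st: "set (take p w) \<subseteq> {..<d}" using w(3) set_take_subset by fastforce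
    have lt: "length (take p w) = p" using p w by auto
    have id: "(k - p, i, j, drop p w) \<in> idx1 d (m - p)"
      using p w set_drop_subset[of p w] unfolding idx1_def by auto
    have ex: "p + (m - p - r) = m - r" using p w r by auto
    have "\<bar>a (take p w) * E (k - p, i, j, drop p w)\<bar> = \<bar>a (take p w)\<bar> * \<bar>E (k - p, i, j, drop p w)\<bar>"
      by (simp add: abs_mult)
    also have "\<dots> \<le> (\<alpha> p * L ^ p) * (\<beta> (m - p) * L ^ (m - p - r))"
      using a[OF st] E[OF id] lt by (intro mult_mono) (auto intro: mult_nonneg_nonneg simp: al L)
    also have "\<dots> = \<alpha> p * \<beta> (m - p) * L ^ (p + (m - p - r))"
      by (simp add: power_add algebra_simps)
    finally show "\<bar>a (take p w) * E (k - p, i, j, drop p w)\<bar> \<le> \<alpha> p * \<beta> (m - p) * L ^ (m - r)"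
      using ex by simp
  qed
  also have "\<dots> \<le> (\<Sum>p\<le>m. \<alpha> p * \<beta> (m - p) * L ^ (m - r))"
    by (rule sum_mono2) (use w in \<open>auto intro!: mult_nonneg_nonneg al be L zero_le_power\<close>)
  also have "\<dots> = (\<Sum>p\<le>m. \<alpha> p * \<beta> (m - p)) * L ^ (m - r)"
    by (simp add: sum_distrib_right)
  finally show ?thesis .
qed

lemma ract_bound:
  assumes b: "\<And>u. set u \<subseteq> {..<d} \<Longrightarrow> \<bar>b u\<bar> \<le> \<alpha> (length u) * L ^ length u"
    and E: "\<And>m \<iota>. \<iota> \<in> idx1 d m \<Longrightarrow> \<bar>E \<iota>\<bar> \<le> \<beta> m * L ^ (m - r)"
    and r: "r \<le> 2" and L: "0 \<le> L" and al: "\<And>p. 0 \<le> \<alpha> p" and be: "\<And>m. 0 \<le> \<beta> m"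
    and i: "\<iota> \<in> idx1 d m"
  shows "\<bar>ract E b \<iota>\<bar> \<le> (\<Sum>q\<le>m. \<beta> (m - q) * \<alpha> q) * L ^ (m - r)"
proof -
  obtain k i j w where iota: "\<iota> = (k,i,j,w)" by (cases \<iota>) auto
  have w: "i < j" "j < d" "set w \<subseteq> {..<d}" "length w + 2 = m" "k \<le> length w"
    using i iota unfolding idx1_def by auto
  have "\<bar>ract E b \<iota>\<bar> = \<bar>\<Sum>q\<le>length w - k. E (k, i, j, take (length w - q) w) * b (drop (length w - q) w)\<bar>"
    by (simp add: ract_def iota)
  also have "\<dots> \<le> (\<Sum>q\<le>length w - k. \<bar>E (k, i, j, take (length w - q) w) * b (drop (length w - q) w)\<bar>)"
    by (rule sum_abs)
  also have "\<dots> \<le> (\<Sum>q\<le>length w - k. \<beta> (m - q) * \<alpha> q * L ^ (m - r))"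
  proof (rule sum_mono)
    fix q assume q: "q \<in> {..length w - k}"
    have st: "set (drop (length w - q) w) \<subseteq> {..<d}" using w(3) set_drop_subset by fastforce
    have lt: "length (drop (length w - q) w) = q" using q w by auto
    have id: "(k, i, j, take (length w - q) w) \<in> idx1 d (m - q)"
      using q w set_take_subset[of "length w - q" w] unfolding idx1_def by auto
    have ex: "(m - q - r) + q = m - r" using q w r by auto
    have "\<bar>E (k, i, j, take (length w - q) w) * b (drop (length w - q) w)\<bar>
        = \<bar>E (k, i, j, take (length w - q) w)\<bar> * \<bar>b (drop (length w - q) w)\<bar>"
      by (simp add: abs_mult)
    also have "\<dots> \<le> (\<beta> (m - q) * L ^ (m - q - r)) * (\<alpha> q * L ^ q)"
      using b[OF st] E[OF id] lt by (intro mult_mono) (auto intro: mult_nonneg_nonneg simp: be L)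
    also have "\<dots> = \<beta> (m - q) * \<alpha> q * L ^ ((m - q - r) + q)"
      by (simp add: power_add algebra_simps)
    finally show "\<bar>E (k, i, j, take (length w - q) w) * b (drop (length w - q) w)\<bar> \<le> \<beta> (m - q) * \<alpha> q * L ^ (m - r)"
      using ex by simp
  qed
  also have "\<dots> \<le> (\<Sum>q\<le>m. \<beta> (m - q) * \<alpha> q * L ^ (m - r))"
    by (rule sum_mono2) (use w in \<open>auto intro!: mult_nonneg_nonneg al be L zero_le_power\<close>)
  also have "\<dots> = (\<Sum>q\<le>m. \<beta> (m - q) * \<alpha> q) * L ^ (m - r)"
    by (simp add: sum_distrib_right)
  finally show ?thesis .
qed

lemma delta_bound:
  assumes E: "\<And>m \<iota>. \<iota> \<in> idx1 d m \<Longrightarrow> \<bar>E \<iota>\<bar> \<le> \<beta> m * L ^ m"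
  shows "\<bar>delta d E u\<bar> \<le> (real (card (idx1 d (length u))) * \<beta> (length u)) * L ^ length u"
proof -
  have bd: "\<bar>basis_delta \<iota> u\<bar> \<le> 1" if "\<iota> \<in> idx1 d (length u)" for \<iota>
  proof -
    obtain k i j w where iota: "\<iota> = (k,i,j,w)" by (cases \<iota>) auto
    have "i < j" using that iota unfolding idx1_def by auto
    then show ?thesis by (auto simp: basis_delta_def iota)
  qed
  have "\<bar>delta d E u\<bar> \<le> (\<Sum>\<iota>\<in>idx1 d (length u). \<bar>E \<iota> * basis_delta \<iota> u\<bar>)"
    unfolding delta_def by (rule sum_abs)
  also have "\<dots> \<le> (\<Sum>\<iota>\<in>idx1 d (length u). \<beta> (length u) * L ^ length u)"
  proof (rule sum_mono)
    fix \<iota> assume i: "\<iota> \<in> idx1 d (length u)"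
    have "\<bar>E \<iota> * basis_delta \<iota> u\<bar> = \<bar>E \<iota>\<bar> * \<bar>basis_delta \<iota> u\<bar>" by (simp add: abs_mult)
    also have "\<dots> \<le> \<bar>E \<iota>\<bar> * 1" by (rule mult_left_mono[OF bd[OF i]]) simp
    finally show "\<bar>E \<iota> * basis_delta \<iota> u\<bar> \<le> \<beta> (length u) * L ^ length u" using E[OF i] by simp
  qed
  also have "\<dots> = (real (card (idx1 d (length u))) * \<beta> (length u)) * L ^ length u"
    by simp
  finally show ?thesis .
qed



lemma sum_pow2_aux: "(\<Sum>p\<in>{1..n}. (2::real) ^ (n - p)) = 2 ^ n - 1"
proof (induction n)
  case 0 then show ?case by simp
next
  case (Suc n)
  have "(\<Sum>p\<in>{1..Suc n}. (2::real) ^ (Suc n - p)) = (\<Sum>p\<in>{1..n}. 2 ^ (Suc n - p)) + 1"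
    by simp
  also have "(\<Sum>p\<in>{1..n}. (2::real) ^ (Suc n - p)) = (\<Sum>p\<in>{1..n}. 2 * 2 ^ (n - p))"
    by (rule sum.cong) (auto simp: Suc_diff_le)
  also have "\<dots> = 2 * (\<Sum>p\<in>{1..n}. (2::real) ^ (n - p))" by (simp add: sum_distrib_left)
  also have "\<dots> = 2 * (2 ^ n - 1)" by (simp only: Suc.IH)
  finally show ?case by simp
qed

lemma sum_pow_aux:
  assumes "0 \<le> (A::real)"
  shows "(\<Sum>p\<in>{1..n}. A ^ p * (2 * A) ^ (n - p)) \<le> (2 * A) ^ n"
proof -
  have "(\<Sum>p\<in>{1..n}. A ^ p * (2 * A) ^ (n - p)) = (\<Sum>p\<in>{1..n}. A ^ n * 2 ^ (n - p))"
  proof (rule sum.cong)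
    fix p assume "p \<in> {1..n}"
    then have "A ^ p * A ^ (n - p) = A ^ n" by (simp add: power_add[symmetric])
    then show "A ^ p * (2 * A) ^ (n - p) = A ^ n * 2 ^ (n - p)"
      by (simp add: power_mult_distrib algebra_simps)
  qed simp
  also have "\<dots> = A ^ n * (\<Sum>p\<in>{1..n}. (2::real) ^ (n - p))" by (simp add: sum_distrib_left)
  also have "\<dots> = A ^ n * (2 ^ n - 1)" by (simp only: sum_pow2_aux)
  also have "\<dots> \<le> A ^ n * 2 ^ n" using assms by (intro mult_left_mono) auto
  finally show ?thesis by (simp add: power_mult_distrib mult.commute)
qed

lemma tinv_bound:
  assumes A: "0 \<le> A" and g: "\<And>w. set w \<subseteq> {..<d} \<Longrightarrow> \<bar>g w\<bar> \<le> A ^ length w"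
  shows "set u \<subseteq> {..<d} \<Longrightarrow> \<bar>tinv g u\<bar> \<le> (2 * A) ^ length u"
proof (induction "length u" arbitrary: u rule: less_induct)
  case less
  show ?case
  proof (cases "u = []")
    case True then show ?thesis by simp
  next
    case False
    let ?n = "length u"
    have "\<bar>tinv g u\<bar> = \<bar>\<Sum>p\<in>{1..?n}. g (take p u) * tinv g (drop p u)\<bar>"
      using False by simp
    also have "\<dots> \<le> (\<Sum>p\<in>{1..?n}. \<bar>g (take p u) * tinv g (drop p u)\<bar>)" by (rule sum_abs)
    also have "\<dots> \<le> (\<Sum>p\<in>{1..?n}. A ^ p * (2 * A) ^ (?n - p))"
    proof (rule sum_mono)
      fix p assume p: "p \<in> {1..?n}"
      have s1: "set (take p u) \<subseteq> {..<d}" using less.prems set_take_subset by fastforce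
      have s2: "set (drop p u) \<subseteq> {..<d}" using less.prems set_drop_subset by fastforce
      have ih: "\<bar>tinv g (drop p u)\<bar> \<le> (2 * A) ^ (?n - p)"
        using less.hyps[of "drop p u"] p s2 by auto
      have "\<bar>g (take p u)\<bar> \<le> A ^ p" using g[OF s1] p by auto
      then show "\<bar>g (take p u) * tinv g (drop p u)\<bar> \<le> A ^ p * (2 * A) ^ (?n - p)"
        unfolding abs_mult using ih A by (intro mult_mono) auto
    qed
    also have "\<dots> \<le> (2 * A) ^ ?n" by (rule sum_pow_aux[OF A])
    finally show ?thesis .
  qed
qed



lemma sigr_bound:
  assumes M: "0 \<le> M"
    and D: "\<And>i v. i < d \<Longrightarrow> 0 \<le> v \<Longrightarrow> v \<le> l \<Longrightarrow> v \<noteq> \<kappa> \<Longrightarrow> \<bar>deriv (x i) v\<bar> \<le> M"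
  shows "set w \<subseteq> {..<d} \<Longrightarrow> 0 \<le> u \<Longrightarrow> u \<le> l \<Longrightarrow> \<bar>sigr x 0 u w\<bar> \<le> (M * u) ^ length w"
proof (induction w arbitrary: u)
  case Nil then show ?case by simp
next
  case (Cons i w)
  have "\<bar>integral {0..u} (\<lambda>v. sigr x 0 v w * deriv (x i) v)\<bar> \<le> ((M * u) ^ length w * M) * (u - 0)"
  proof (rule integral_bound_fin)
    show "0 \<le> (M * u) ^ length w * M" using M Cons.prems by simp
    show "finite {\<kappa>}" by simp
    fix v assume v: "v \<in> {0..u} - {\<kappa>}"
    have "\<bar>sigr x 0 v w\<bar> \<le> (M * v) ^ length w" using Cons v by auto
    also have "\<dots> \<le> (M * u) ^ length w" using v M by (intro power_mono mult_left_mono) auto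
    finally have 1: "\<bar>sigr x 0 v w\<bar> \<le> (M * u) ^ length w" .
    have 2: "\<bar>deriv (x i) v\<bar> \<le> M" using D[of i v] Cons.prems v by auto
    show "\<bar>sigr x 0 v w * deriv (x i) v\<bar> \<le> (M * u) ^ length w * M"
      unfolding abs_mult using 1 2 by (intro mult_mono) auto
  qed (use Cons.prems in auto)
  then show ?case by (simp add: algebra_simps)
qed

lemma sig_bound:
  assumes M: "0 \<le> M"
    and D: "\<And>i v. i < d \<Longrightarrow> 0 \<le> v \<Longrightarrow> v \<le> l \<Longrightarrow> v \<noteq> \<kappa> \<Longrightarrow> \<bar>deriv (x i) v\<bar> \<le> M"
    and l: "0 \<le> l" "l \<le> L"
    and w: "set w \<subseteq> {..<d}"
  shows "\<bar>sig x 0 l w\<bar> \<le> M ^ length w * L ^ length w"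
proof -
  have "\<bar>sig x 0 l w\<bar> \<le> (M * l) ^ length (rev w)"
    unfolding sig_def by (rule sigr_bound[where l=l, OF M D]) (use w l in auto)
  also have "\<dots> \<le> (M * L) ^ length w" using l M by (simp only: length_rev, intro power_mono mult_left_mono) auto
  finally show ?thesis by (simp add: power_mult_distrib)
qed

lemma tail_deriv:
  assumes bd: "\<And>i p. i < d \<Longrightarrow> p \<in> {sm..sp} \<times> {tm..tp} \<Longrightarrow>
                 \<bar>pdiff [True] (X i) p\<bar> \<le> M \<and> \<bar>pdiff [False] (X i) p\<bar> \<le> M"
    and df: "\<And>i s t. i < d \<Longrightarrow> (s,t) \<in> {sm..sp} \<times> {tm..tp} \<Longrightarrow>
                 (\<lambda>s'. X i (s',t)) differentiable (at s) \<and> (\<lambda>t'. X i (s,t')) differentiable (at t)"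
    and par: "sm \<le> a" "a \<le> s" "s \<le> sp" "tm \<le> c" "c \<le> t" "t \<le> tp"
    and i: "i < d" and v: "0 \<le> v" "v \<le> (s - a) + (t - c)" "v \<noteq> s - a"
  shows "\<bar>deriv (tailpath X a c s t i) v\<bar> \<le> M"
proof (cases "v < s - a")
  case True
  let ?f = "\<lambda>s'. X i (s', c)"
  have inR: "(v + a, c) \<in> {sm..sp} \<times> {tm..tp}" using par v True by auto
  have "?f differentiable (at (v + a))" using df[OF i inR] by simp
  then have "(?f has_field_derivative deriv ?f (v + a)) (at (v + a))"
    using DERIV_deriv_iff_real_differentiable by blast
  then have "((\<lambda>u. ?f (u + a)) has_field_derivative deriv ?f (v + a)) (at v)"
    by (simp add: DERIV_shift)
  then have "(tailpath X a c s t i has_field_derivative deriv ?f (v + a)) (at v)"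
    by (rule has_field_derivative_transform_within_open[where S = "{..<s - a}"])
       (use True in \<open>auto simp: tailpath_def\<close>)
  then have "deriv (tailpath X a c s t i) v = pdiff [True] (X i) (v + a, c)"
    by (simp add: DERIV_imp_deriv)
  then show ?thesis using bd[OF i inR] by simp
next
  case False
  then have F: "v > s - a" using v by auto
  let ?f = "\<lambda>t'. X i (s, t')"
  have inR: "(s, v - (s - a) + c) \<in> {sm..sp} \<times> {tm..tp}" using par v F by auto
  have "?f differentiable (at (v - (s - a) + c))" using df[OF i inR] by simp
  then have "(?f has_field_derivative deriv ?f (v - (s - a) + c)) (at (v + (c - (s - a))))"
    using DERIV_deriv_iff_real_differentiable by (simp add: algebra_simps)
  then have "((\<lambda>u. ?f (u + (c - (s - a)))) has_field_derivative deriv ?f (v - (s - a) + c)) (at v)"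
    by (simp add: DERIV_shift)
  then have "(tailpath X a c s t i has_field_derivative deriv ?f (v - (s - a) + c)) (at v)"
    by (rule has_field_derivative_transform_within_open[where S = "{s - a<..}"])
       (use F in \<open>auto simp: tailpath_def algebra_simps\<close>)
  then have "deriv (tailpath X a c s t i) v = pdiff [False] (X i) (s, v - (s - a) + c)"
    by (simp add: DERIV_imp_deriv)
  then show ?thesis using bd[OF i inR] by simp
qed



context
  fixes d :: nat and X :: "nat \<Rightarrow> real \<times> real \<Rightarrow> real" and sm sp tm tp M :: real
  assumes M: "0 \<le> M"
    and bd: "\<And>i p. i < d \<Longrightarrow> p \<in> {sm..sp} \<times> {tm..tp} \<Longrightarrow>
                 \<bar>pdiff [True] (X i) p\<bar> \<le> M \<and> \<bar>pdiff [False] (X i) p\<bar> \<le> M"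
    and df: "\<And>i s t. i < d \<Longrightarrow> (s,t) \<in> {sm..sp} \<times> {tm..tp} \<Longrightarrow>
                 (\<lambda>s'. X i (s',t)) differentiable (at s) \<and> (\<lambda>t'. X i (s,t')) differentiable (at t)"
begin

lemma J_bound:
  assumes st: "(s,t) \<in> {sm..sp} \<times> {tm..tp}" and L: "0 \<le> L" and i: "\<iota> \<in> idx1 d m"
  shows "\<bar>Jst d X s t \<iota>\<bar> \<le> (2 * M ^ 2) * L ^ (m - 2)"
proof -
  obtain k i j w where iota: "\<iota> = (k,i,j,w)" by (cases \<iota>) auto
  show ?thesis
  proof (cases "k = 0 \<and> w = [] \<and> i < j \<and> j < d")
    case True
    then have m: "m = 2" using i iota unfolding idx1_def by auto
    have b1: "\<bar>deriv (\<lambda>s'. X i (s',t)) s\<bar> \<le> M" "\<bar>deriv (\<lambda>t'. X i (s,t')) t\<bar> \<le> M"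
      using bd[OF _ st, of i] True by auto
    have b2: "\<bar>deriv (\<lambda>s'. X j (s',t)) s\<bar> \<le> M" "\<bar>deriv (\<lambda>t'. X j (s,t')) t\<bar> \<le> M"
      using bd[OF _ st, of j] True by auto
    have "\<bar>deriv (\<lambda>s'. X i (s',t)) s * deriv (\<lambda>t'. X j (s,t')) t
         - deriv (\<lambda>s'. X j (s',t)) s * deriv (\<lambda>t'. X i (s,t')) t\<bar>
       \<le> \<bar>deriv (\<lambda>s'. X i (s',t)) s\<bar> * \<bar>deriv (\<lambda>t'. X j (s,t')) t\<bar>
         + \<bar>deriv (\<lambda>s'. X j (s',t)) s\<bar> * \<bar>deriv (\<lambda>t'. X i (s,t')) t\<bar>"
      by (simp add: abs_mult[symmetric] abs_triangle_ineq4)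
    also have "\<dots> \<le> M * M + M * M"
      using b1 b2 by (intro add_mono mult_mono) auto
    finally show ?thesis using True m by (simp add: Jst_def iota power2_eq_square)
  next
    case False
    then show ?thesis using M L by (auto simp: Jst_def iota)
  qed
qed

definition "\<gamma>1 m = (\<Sum>p\<le>m. M ^ p * (2 * M ^ 2))"
definition "\<gamma>2 m = (\<Sum>q\<le>m. \<gamma>1 (m - q) * (2 * M) ^ q)"

lemma \<gamma>_nonneg: "0 \<le> \<gamma>1 m" "0 \<le> \<gamma>2 m"
  unfolding \<gamma>1_def \<gamma>2_def using M by (auto intro!: sum_nonneg mult_nonneg_nonneg)

definition "valid a b c e \<longleftrightarrow> sm \<le> a \<and> a \<le> b \<and> b \<le> sp \<and> tm \<le> c \<and> c \<le> e \<and> e \<le> tp"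

lemma act_bound:
  assumes v: "valid a b c e" and s: "a \<le> s" "s \<le> b" and t: "c \<le> t" "t \<le> e"
    and i: "\<iota> \<in> idx1 d m"
  shows "\<bar>act (sig (tailpath X a c s t) 0 ((s - a) + (t - c))) (Jst d X s t) \<iota>\<bar>
          \<le> \<gamma>2 m * ((b - a) + (e - c)) ^ (m - 2)"
proof -
  define L where "L = (b - a) + (e - c)"
  define g where "g = sig (tailpath X a c s t) 0 ((s - a) + (t - c))"
  have L0: "0 \<le> L" using v unfolding valid_def L_def by auto
  have gb: "\<bar>g w\<bar> \<le> M ^ length w * L ^ length w" if w: "set w \<subseteq> {..<d}" for w
    unfolding g_def
  proof (rule sig_bound[OF M _ _ _ w])
    show "\<And>i v. i < d \<Longrightarrow> 0 \<le> v \<Longrightarrow> v \<le> s - a + (t - c) \<Longrightarrow> v \<noteq> s - a \<Longrightarrow>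
            \<bar>deriv (tailpath X a c s t i) v\<bar> \<le> M"
      by (rule tail_deriv[OF bd df]) (use v s t in \<open>auto simp: valid_def\<close>)
  qed (use v s t in \<open>auto simp: valid_def L_def\<close>)
  have tb: "\<bar>tinv g w\<bar> \<le> (2 * M) ^ length w * L ^ length w" if w: "set w \<subseteq> {..<d}" for w
  proof -
    have "\<bar>tinv g w\<bar> \<le> (2 * (M * L)) ^ length w"
      by (rule tinv_bound[OF _ _ w]) (use gb M L0 in \<open>auto simp: power_mult_distrib\<close>)
    then show ?thesis by (simp add: power_mult_distrib)
  qed
  have st: "(s,t) \<in> {sm..sp} \<times> {tm..tp}" using v s t unfolding valid_def by auto
  have lb: "\<bar>lact g (Jst d X s t) \<iota>'\<bar> \<le> \<gamma>1 m' * L ^ (m' - 2)" if "\<iota>' \<in> idx1 d m'" for \<iota>' m'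
    unfolding \<gamma>1_def
    by (rule lact_bound[where \<alpha> = "\<lambda>p. M ^ p" and \<beta> = "\<lambda>_. 2 * M ^ 2", OF gb J_bound[OF st L0]])
       (use M L0 that in auto)
  have "\<bar>ract (lact g (Jst d X s t)) (tinv g) \<iota>\<bar> \<le> \<gamma>2 m * L ^ (m - 2)"
    unfolding \<gamma>2_def
    by (rule ract_bound[where \<alpha> = "\<lambda>q. (2 * M) ^ q" and \<beta> = \<gamma>1, OF tb lb])
       (use M L0 i \<gamma>_nonneg in auto)
  then show ?thesis by (simp add: act_def g_def L_def)
qed

lemma F_bound:
  assumes v: "valid a b c e" and t: "c \<le> t" "t \<le> e" and i: "\<iota> \<in> idx1 d m"
  shows "\<bar>Fst d X a c b t \<iota>\<bar> \<le> \<gamma>2 m * ((b - a) + (e - c)) ^ (m - 1)"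
proof -
  define L where "L = (b - a) + (e - c)"
  have L0: "0 \<le> L" using v unfolding valid_def L_def by auto
  have m2: "2 \<le> m" using idx1_ge2[OF i] .
  have "\<bar>Fst d X a c b t \<iota>\<bar> \<le> (\<gamma>2 m * L ^ (m - 2)) * (b - a)"
    unfolding Fst_def
    by (rule integral_bound_fin[where S = "{}"])
       (use v t i act_bound[OF v _ _ t i] \<gamma>_nonneg L0 in \<open>auto simp: valid_def L_def\<close>)
  also have "\<dots> \<le> (\<gamma>2 m * L ^ (m - 2)) * L"
    using v \<gamma>_nonneg L0 by (intro mult_left_mono) (auto simp: valid_def L_def)
  also have "\<dots> = \<gamma>2 m * L ^ (m - 1)"
  proof -
    obtain m' where "m = Suc (Suc m')" using m2 by (metis add_2_eq_Suc le_Suc_ex)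
    then show ?thesis by (simp add: algebra_simps)
  qed
  finally show ?thesis by (simp add: L_def)
qed

lemma Rc_bound:
  "\<exists>\<rho>. (\<forall>m. 0 \<le> \<rho> m) \<and> (\<forall>a b c e t m \<iota>. valid a b c e \<longrightarrow> c \<le> t \<longrightarrow> t \<le> e \<longrightarrow>
      \<iota> \<in> idx1 d m \<longrightarrow> \<bar>Rc d X a b c n t \<iota>\<bar> \<le> \<rho> m * ((b - a) + (e - c)) ^ m)"
proof (induction n)
  case 0
  show ?case by (rule exI[of _ "\<lambda>_. 0"]) simp
next
  case (Suc n)
  then obtain \<rho> where \<rho>0: "\<And>m. 0 \<le> \<rho> m" and
    \<rho>: "\<And>a b c e t m \<iota>. valid a b c e \<Longrightarrow> c \<le> t \<Longrightarrow> t \<le> e \<Longrightarrow>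
      \<iota> \<in> idx1 d m \<Longrightarrow> \<bar>Rc d X a b c n t \<iota>\<bar> \<le> \<rho> m * ((b - a) + (e - c)) ^ m" by blast
  define \<rho>' where "\<rho>' m = \<gamma>2 m + (\<Sum>p\<le>m. (real (card (idx1 d p)) * \<rho> p) * \<gamma>2 (m - p))" for m
  have \<rho>'0: "0 \<le> \<rho>' m" for m
    unfolding \<rho>'_def using \<gamma>_nonneg \<rho>0 by (auto intro!: add_nonneg_nonneg sum_nonneg mult_nonneg_nonneg)
  show ?case
  proof (rule exI[of _ \<rho>'], intro conjI allI impI)
    fix m show "0 \<le> \<rho>' m" by (rule \<rho>'0)
  next
    fix a b c e t m \<iota>
    assume v: "valid a b c e" and t: "c \<le> t" "t \<le> e" and i: "\<iota> \<in> idx1 d m"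
    define L where "L = (b - a) + (e - c)"
    have L0: "0 \<le> L" using v unfolding valid_def L_def by auto
    have m2: "2 \<le> m" using idx1_ge2[OF i] .
    have intb: "\<bar>Fst d X a c b t' \<iota> + lact (delta d (Rc d X a b c n t')) (Fst d X a c b t') \<iota>\<bar>
         \<le> \<rho>' m * L ^ (m - 1)" if t': "t' \<in> {c..t}" for t'
    proof -
      have t'e: "c \<le> t'" "t' \<le> e" using t' t by auto
      have F1: "\<bar>Fst d X a c b t' \<iota>\<bar> \<le> \<gamma>2 m * L ^ (m - 1)"
        using F_bound[OF v t'e i] by (simp add: L_def)
      have db: "\<bar>delta d (Rc d X a b c n t') u\<bar> \<le> (real (card (idx1 d (length u))) * \<rho> (length u)) * L ^ length u" for u
        by (rule delta_bound) (use \<rho>[OF v t'e] in \<open>auto simp: L_def\<close>)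
      have F2: "\<bar>lact (delta d (Rc d X a b c n t')) (Fst d X a c b t') \<iota>\<bar>
           \<le> (\<Sum>p\<le>m. (real (card (idx1 d p)) * \<rho> p) * \<gamma>2 (m - p)) * L ^ (m - 1)"
        by (rule lact_bound[where \<beta> = \<gamma>2, OF db])
           (use F_bound[OF v t'e] L0 \<rho>0 \<gamma>_nonneg i in \<open>auto simp: L_def\<close>)
      have "\<bar>Fst d X a c b t' \<iota> + lact (delta d (Rc d X a b c n t')) (Fst d X a c b t') \<iota>\<bar>
           \<le> \<bar>Fst d X a c b t' \<iota>\<bar> + \<bar>lact (delta d (Rc d X a b c n t')) (Fst d X a c b t') \<iota>\<bar>"
        by (rule abs_triangle_ineq)
      also have "\<dots> \<le> \<rho>' m * L ^ (m - 1)"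
        using add_mono[OF F1 F2] by (simp add: \<rho>'_def algebra_simps)
      finally show ?thesis .
    qed
    have "\<bar>Rc d X a b c (Suc n) t \<iota>\<bar> \<le> (\<rho>' m * L ^ (m - 1)) * (t - c)"
    proof (cases "lvl1 \<iota> \<le> Suc n")
      case True
      then show ?thesis
        using integral_bound_fin[where S = "{}" and a = c and b = t and B = "\<rho>' m * L ^ (m - 1)", OF t(1) _ _ intb]
          \<rho>'0 L0 by simp
    next
      case False
      then show ?thesis using \<rho>'0 L0 t by simp
    qed
    also have "\<dots> \<le> (\<rho>' m * L ^ (m - 1)) * L"
      using v t \<rho>'0 L0 by (intro mult_left_mono) (auto simp: valid_def L_def)
    also have "\<dots> = \<rho>' m * L ^ m"
    proof -
      obtain m' where "m = Suc (Suc m')" using m2 by (metis add_2_eq_Suc le_Suc_ex)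
      then show ?thesis by (simp add: algebra_simps)
    qed
    finally show "\<bar>Rc d X a b c (Suc n) t \<iota>\<bar> \<le> \<rho>' m * ((b - a) + (e - c)) ^ m"
      by (simp add: L_def)
  qed
qed

end



lemma cont_bound:
  fixes f :: "real \<times> real \<Rightarrow> real"
  assumes "continuous_on K f" "compact K"
  shows "\<exists>B. \<forall>p\<in>K. \<bar>f p\<bar> \<le> B"
proof -
  have "bounded (f ` K)" by (rule compact_imp_bounded[OF compact_continuous_image[OF assms(1,2)]])
  then obtain B where "\<forall>x\<in>f ` K. norm x \<le> B" by (auto simp: bounded_iff)
  then show ?thesis by auto
qed


theorem proposition4p27:
  fixes d :: nat and X :: "nat \<Rightarrow> real \<times> real \<Rightarrow> real" and sm sp tm tp :: real
  assumes "sm < sp" and "tm < tp"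
    and "\<exists>U. open U \<and> {sm..sp} \<times> {tm..tp} \<subseteq> U \<and> (\<forall>i<d. smooth_on U (X i))"
  shows "\<forall>n\<ge>2. \<exists>C>0. \<forall>a b c e. sm \<le> a \<and> a \<le> b \<and> b \<le> sp \<and> tm \<le> c \<and> c \<le> e \<and> e \<le> tp \<longrightarrow>
           qnorm d n (surf_sig d X a b c e n) \<le> C * (\<bar>b - a\<bar> + \<bar>e - c\<bar>) ^ n"
proof -
  obtain U where U: "open U" "{sm..sp} \<times> {tm..tp} \<subseteq> U" "\<forall>i<d. smooth_on U (X i)"
    using assms(3) by blast
  let ?R = "{sm..sp} \<times> {tm..tp}"
  have cR: "compact ?R" by (intro compact_Times compact_Icc)
  have "\<exists>B. \<forall>p\<in>?R. \<bar>pdiff [True] (X i) p\<bar> \<le> B \<and> \<bar>pdiff [False] (X i) p\<bar> \<le> B" if i: "i < d" for i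
  proof -
    have sm: "smooth_on U (X i)" using U i by auto
    obtain B1 where B1: "\<forall>p\<in>?R. \<bar>pdiff [True] (X i) p\<bar> \<le> B1"
      using cont_bound[OF continuous_on_subset[OF _ U(2)] cR] sm unfolding smooth_on_def by blast
    obtain B2 where B2: "\<forall>p\<in>?R. \<bar>pdiff [False] (X i) p\<bar> \<le> B2"
      using cont_bound[OF continuous_on_subset[OF _ U(2)] cR] sm unfolding smooth_on_def by blast
    show ?thesis
    proof (intro exI[of _ "max B1 B2"] ballI conjI)
      fix p assume p: "p \<in> ?R"
      show "\<bar>pdiff [True] (X i) p\<bar> \<le> max B1 B2" using B1 p by (meson max.coboundedI1)
      show "\<bar>pdiff [False] (X i) p\<bar> \<le> max B1 B2" using B2 p by (meson max.coboundedI2)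
    qed
  qed
  then obtain Bf where Bf: "\<And>i p. i < d \<Longrightarrow> p \<in> ?R \<Longrightarrow>
      \<bar>pdiff [True] (X i) p\<bar> \<le> Bf i \<and> \<bar>pdiff [False] (X i) p\<bar> \<le> Bf i"
    by metis
  define M where "M = (\<Sum>i<d. \<bar>Bf i\<bar>)"
  have M0: "0 \<le> M" unfolding M_def by (auto intro: sum_nonneg)
  have BM: "Bf i \<le> M" if "i < d" for i
  proof -
    have "\<bar>Bf i\<bar> \<le> M" unfolding M_def by (rule member_le_sum) (use that in auto)
    then show ?thesis by simp
  qed
  have bd: "\<And>i p. i < d \<Longrightarrow> p \<in> ?R \<Longrightarrow>
                 \<bar>pdiff [True] (X i) p\<bar> \<le> M \<and> \<bar>pdiff [False] (X i) p\<bar> \<le> M"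
    using Bf BM by fastforce
  have df: "\<And>i s t. i < d \<Longrightarrow> (s,t) \<in> ?R \<Longrightarrow>
                 (\<lambda>s'. X i (s',t)) differentiable (at s) \<and> (\<lambda>t'. X i (s,t')) differentiable (at t)"
  proof -
    fix i s t assume i: "i < d" and st: "(s,t) \<in> ?R"
    have "(s,t) \<in> U" using st U(2) by blast
    then show "(\<lambda>s'. X i (s',t)) differentiable (at s) \<and> (\<lambda>t'. X i (s,t')) differentiable (at t)"
      using U(3) i unfolding smooth_on_def by (metis pdiff.simps(1))
  qed
  show ?thesis
  proof (intro allI impI)
    fix n :: nat assume n: "2 \<le> n"
    obtain \<rho> where \<rho>0: "\<And>m. 0 \<le> \<rho> m" and
      \<rho>: "\<And>a b c e t m \<iota>. valid sm sp tm tp a b c e \<Longrightarrow> c \<le> t \<Longrightarrow> t \<le> e \<Longrightarrow>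
      \<iota> \<in> idx1 d m \<Longrightarrow> \<bar>Rc d X a b c n t \<iota>\<bar> \<le> \<rho> m * ((b - a) + (e - c)) ^ m"
      using Rc_bound[where d=d and X=X and sm=sm and sp=sp and tm=tm and tp=tp and M=M and n=n, OF M0 bd df] by blast
    define C where "C = real (card (idx1 d n)) * \<rho> n + 1"
    show "\<exists>C>0. \<forall>a b c e. sm \<le> a \<and> a \<le> b \<and> b \<le> sp \<and> tm \<le> c \<and> c \<le> e \<and> e \<le> tp \<longrightarrow>
           qnorm d n (surf_sig d X a b c e n) \<le> C * (\<bar>b - a\<bar> + \<bar>e - c\<bar>) ^ n"
    proof (intro exI[of _ C] conjI allI impI)
      show "0 < C" unfolding C_def using \<rho>0[of n] by (simp add: add_nonneg_pos)
    next
      fix a b c e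
      assume p: "sm \<le> a \<and> a \<le> b \<and> b \<le> sp \<and> tm \<le> c \<and> c \<le> e \<and> e \<le> tp"
      then have v: "valid sm sp tm tp a b c e" using valid_def by blast
      define L where "L = (b - a) + (e - c)"
      have L0: "0 \<le> L" using p unfolding L_def by auto
      define E where "E = surf_sig d X a b c e n"
      have "qnorm d n E \<le> norm1 d n (\<lambda>\<iota>. E \<iota> - 0)"
        unfolding qnorm_def
      proof (rule cInf_lower)
        show "norm1 d n (\<lambda>\<iota>. E \<iota> - 0) \<in> {norm1 d n (\<lambda>\<iota>. E \<iota> - P \<iota>) |P. P \<in> Pf d}"
          by (intro CollectI exI[of _ "\<lambda>\<iota>. 0"]) (simp add: Pf.Pf_zero)
        show "bdd_below {norm1 d n (\<lambda>\<iota>. E \<iota> - P \<iota>) |P. P \<in> Pf d}"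
          by (rule bdd_belowI[of _ 0]) (auto simp: norm1_def intro!: sum_nonneg)
      qed
      also have "\<dots> = L2_set E (idx1 d n)" by (simp add: norm1_def L2_set_def)
      also have "\<dots> \<le> (\<Sum>\<iota>\<in>idx1 d n. \<bar>E \<iota>\<bar>)" by (rule L2_set_le_sum_abs)
      also have "\<dots> \<le> (\<Sum>\<iota>\<in>idx1 d n. \<rho> n * L ^ n)"
        by (rule sum_mono) (use \<rho>[of a b c e e, OF v] p in \<open>auto simp: E_def surf_sig_def L_def\<close>)
      also have "\<dots> = real (card (idx1 d n)) * \<rho> n * L ^ n" by simp
      also have "\<dots> \<le> C * L ^ n" unfolding C_def using L0 by (intro mult_right_mono) auto
      finally show "qnorm d n (surf_sig d X a b c e n) \<le> C * (\<bar>b - a\<bar> + \<bar>e - c\<bar>) ^ n"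
        using p by (simp add: E_def L_def)
    qed
  qed
qed

end
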